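(* Let $X$ be a connected, locally connected Hausdorff topological space, $V$ a locally convex topological vector space, and $f:X\to V$ a continuous map that has local convexity data. Assume that $f$ has connected fibers and that $f:X\to f(X)$ is a closed map (with $f(X)$ carrying the subspace topology). Then $f$ is open onto its image $f(X)$ and $f(X)$ is locally convex. If moreover $f(X)$ is closed in $V$, then $f(X)$ is convex.
   Context: A subset $C\subset V$ is a cone with vertex $v_0$ if $v_0\in C$ and $(1-\lambda)v_0+\lambda v\in C$ for every $\lambda\ge 0$ and every $v\in C$, $v\ne v_0$; it is a convex cone if it is moreover convex. A continuous map $f:X\to V$ has local convexity data if for each $x\in X$ and every sufficiently small open neighborhood $U_x$ of $x$ there is a convex cone $C_x\subset V$ with vertex $f(x)$, endowed with the subspace topology from $V$, such that (VN) $f(U_x)\subset C_x$ and $f(U_x)$ is a neighborhood of $f(x)$ in $C_x$; and (SLO) $f|_{U_x}:U_x\to C_x$ is an open map, and for every neighborhood $U'_x\subset U_x$ of $x$ the set $f(U'_x)$ is a neighborhood of $f(x)$ in $C_x$. A subset $Y\subset V$ is locally convex if every $y\in Y$ has a neighborhood $N$ in $V$ with $N\cap Y$ convex. "Open onto its image" means $f:X\to f(X)$ is open for the subspace topology on $f(X)$. *)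

theory Defs
  imports "HOL-Analysis.Analysis"
begin

definition locally_convex_tvs :: "'a::{real_vector,t2_space} itself \<Rightarrow> bool" where
  "locally_convex_tvs _ \<longleftrightarrow>
     continuous_on UNIV (\<lambda>p::'a \<times> 'a. fst p + snd p) \<and>
     continuous_on UNIV (\<lambda>p::real \<times> 'a. fst p *\<^sub>R snd p) \<and>
     (\<forall>x U. open U \<and> x \<in> U \<longrightarrow> (\<exists>W::'a set. open W \<and> convex W \<and> x \<in> W \<and> W \<subseteq> U))"

definition cone_with_vertex :: "'v::real_vector set \<Rightarrow> 'v \<Rightarrow> bool" where
  "cone_with_vertex C v0 \<longleftrightarrow> v0 \<in> C \<and>
     (\<forall>l::real. l \<ge> 0 \<longrightarrow> (\<forall>v\<in>C. v \<noteq> v0 \<longrightarrow> (1 - l) *\<^sub>R v0 + l *\<^sub>R v \<in> C))"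

definition convex_cone_with_vertex :: "'v::real_vector set \<Rightarrow> 'v \<Rightarrow> bool" where
  "convex_cone_with_vertex C v0 \<longleftrightarrow> cone_with_vertex C v0 \<and> convex C"

definition nbhd_in :: "'a topology \<Rightarrow> 'a set \<Rightarrow> 'a \<Rightarrow> bool" where
  "nbhd_in T N p \<longleftrightarrow> (\<exists>W. openin T W \<and> p \<in> W \<and> W \<subseteq> N)"

definition local_convexity_data :: "('x::topological_space \<Rightarrow> 'v::{real_vector,topological_space}) \<Rightarrow> bool" where
  "local_convexity_data f \<longleftrightarrow>
    (\<forall>x. \<exists>N. open N \<and> x \<in> N \<and>
      (\<forall>U. open U \<and> x \<in> U \<and> U \<subseteq> N \<longrightarrow>
        (\<exists>C. convex_cone_with_vertex C (f x) \<and>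
             f ` U \<subseteq> C \<and> nbhd_in (top_of_set C) (f ` U) (f x) \<and>
             open_map (top_of_set U) (top_of_set C) f \<and>
             (\<forall>U'. U' \<subseteq> U \<and> nbhd_in euclidean U' x \<longrightarrow>
                 nbhd_in (top_of_set C) (f ` U') (f x)))))"

definition locally_convex_set :: "'v::{real_vector,topological_space} set \<Rightarrow> bool" where
  "locally_convex_set Y \<longleftrightarrow> (\<forall>y\<in>Y. \<exists>N. nbhd_in euclidean N y \<and> convex (N \<inter> Y))"

end

theory Submission
  imports Defs
begin


lemma tvs_add:
  fixes g h :: "'a::topological_space \<Rightarrow> 'v::{real_vector,t2_space}"
  assumes tvs: "locally_convex_tvs TYPE('v)" and "continuous_on S g" "continuous_on S h"
  shows "continuous_on S (\<lambda>x. g x + h x)"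
proof -
  have c: "continuous_on UNIV (\<lambda>p::'v\<times>'v. fst p + snd p)"
    using tvs unfolding locally_convex_tvs_def by blast
  show ?thesis
    using continuous_on_compose2[OF c continuous_on_Pair[OF assms(2,3)]] by simp
qed

lemma tvs_scale:
  fixes g :: "'a::topological_space \<Rightarrow> real" and h :: "'a \<Rightarrow> 'v::{real_vector,t2_space}"
  assumes tvs: "locally_convex_tvs TYPE('v)" and "continuous_on S g" "continuous_on S h"
  shows "continuous_on S (\<lambda>x. g x *\<^sub>R h x)"
proof -
  have c: "continuous_on UNIV (\<lambda>p::real\<times>'v. fst p *\<^sub>R snd p)"
    using tvs unfolding locally_convex_tvs_def by blast
  show ?thesis
    using continuous_on_compose2[OF c continuous_on_Pair[OF assms(2,3)]] by simp
qed

lemma tvs_small: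
  fixes p w :: "'v::{real_vector,t2_space}"
  assumes tvs: "locally_convex_tvs TYPE('v)" and "open G" "p \<in> G"
  shows "\<exists>e>0. \<forall>t. 0 \<le> t \<and> t \<le> e \<longrightarrow> p + t *\<^sub>R w \<in> G"
proof -
  have "continuous_on UNIV (\<lambda>t::real. p + t *\<^sub>R w)"
    by (intro tvs_add[OF tvs] tvs_scale[OF tvs] continuous_on_const continuous_on_id)
  then have "open ((\<lambda>t::real. p + t *\<^sub>R w) -` G)"
    using assms(2) continuous_on_open_vimage[of UNIV] by auto
  moreover have "0 \<in> (\<lambda>t::real. p + t *\<^sub>R w) -` G" using assms by simp
  ultimately obtain e where e: "e > 0" "ball 0 e \<subseteq> (\<lambda>t::real. p + t *\<^sub>R w) -` G"
    by (meson open_contains_ball)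
  show ?thesis
    by (rule exI[of _ "e/2"]) (use e in \<open>auto simp: subset_iff dist_real_def\<close>)
qed

lemma cone_vertex: "convex_cone_with_vertex C y \<Longrightarrow> y \<in> C"
  by (simp add: convex_cone_with_vertex_def cone_with_vertex_def)

lemma cone_scale:
  assumes "convex_cone_with_vertex C y" "y + w \<in> C" "0 \<le> l"
  shows "y + l *\<^sub>R w \<in> C"
proof (cases "w = 0")
  case True then show ?thesis using cone_vertex[OF assms(1)] by simp
next
  case False
  then have "(1 - l) *\<^sub>R y + l *\<^sub>R (y + w) \<in> C"
    using assms unfolding convex_cone_with_vertex_def cone_with_vertex_def by auto
  moreover have "(1 - l) *\<^sub>R y + l *\<^sub>R (y + w) = y + l *\<^sub>R w"
    by (simp add: algebra_simps)
  ultimately show ?thesis by simp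
qed

lemma cone_unscale:
  assumes "convex_cone_with_vertex C y" "y + e *\<^sub>R w \<in> C" "0 < e"
  shows "y + w \<in> C"
  using cone_scale[OF assms(1,2), of "1/e"] assms(3) by simp

lemma cone_add:
  assumes "convex_cone_with_vertex C y" "y + v \<in> C" "y + w \<in> C"
  shows "y + (v + w) \<in> C"
proof -
  have "convex C" using assms(1) by (simp add: convex_cone_with_vertex_def)
  then have "(1/2) *\<^sub>R (y + v) + (1/2) *\<^sub>R (y + w) \<in> C"
    using assms(2,3) convexD[of C "y + v" "y + w" "1/2" "1/2"] by simp
  moreover have "(1/2) *\<^sub>R (y + v) + (1/2) *\<^sub>R (y + w) = y + (1/2::real) *\<^sub>R (v + w)"
    by (simp add: algebra_simps flip: scaleR_add_left)
  ultimately show ?thesis using cone_unscale[OF assms(1), of "1/2" "v + w"] by simp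
qed

lemma seg_mem:
  fixes a :: "'v::real_vector"
  assumes "0 \<le> u" "u \<le> 1"
  shows "(1 - u) *\<^sub>R a + u *\<^sub>R z \<in> closed_segment a z"
  unfolding closed_segment_def using assms by blast
lemma seg_obt:
  fixes a :: "'v::real_vector"
  assumes "x \<in> closed_segment a z"
  obtains u where "0 \<le> u" "u \<le> 1" "x = (1 - u) *\<^sub>R a + u *\<^sub>R z"
  using assms unfolding closed_segment_def by blast
lemma segH:
  fixes a :: "'v::real_vector"
  shows "{z\<in>S. closed_segment a z \<subseteq> S} = S \<inter> (\<Inter>u\<in>{0..1::real}. (\<lambda>z. (1 - u) *\<^sub>R a + u *\<^sub>R z) -` S)"
proof (intro equalityI subsetI)
  fix z assume z: "z \<in> {z\<in>S. closed_segment a z \<subseteq> S}"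
  then have zS: "z \<in> S" and sg: "closed_segment a z \<subseteq> S" by blast+
  have m: "(1 - u) *\<^sub>R a + u *\<^sub>R z \<in> S" if "u \<in> {0..1}" for u :: real
  proof -
    have "0 \<le> u" "u \<le> 1" using that by auto
    then show ?thesis using seg_mem sg by blast
  qed
  show "z \<in> S \<inter> (\<Inter>u\<in>{0..1::real}. (\<lambda>z. (1 - u) *\<^sub>R a + u *\<^sub>R z) -` S)"
  proof (rule IntI[OF zS], rule INT_I)
    fix u :: real assume "u \<in> {0..1}"
    then show "z \<in> (\<lambda>z. (1 - u) *\<^sub>R a + u *\<^sub>R z) -` S" using m by blast
  qed
next
  fix z assume z: "z \<in> S \<inter> (\<Inter>u\<in>{0..1::real}. (\<lambda>z. (1 - u) *\<^sub>R a + u *\<^sub>R z) -` S)"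
  then have zS: "z \<in> S" and zH: "\<forall>u\<in>{0..1::real}. (1 - u) *\<^sub>R a + u *\<^sub>R z \<in> S" by blast+
  have "x \<in> S" if xs: "x \<in> closed_segment a z" for x
  proof -
    obtain u where "0 \<le> u" "u \<le> 1" "x = (1 - u) *\<^sub>R a + u *\<^sub>R z" using seg_obt[OF xs] .
    then show ?thesis using zH by auto
  qed
  then show "z \<in> {z\<in>S. closed_segment a z \<subseteq> S}"
    using zS by blast
qed


lemma tietze_cone:
  fixes S :: "'v::{real_vector,t2_space} set"
  assumes tvs: "locally_convex_tvs TYPE('v)" and clS: "closed S" and coS: "connected S"
    and loc: "\<And>y. y \<in> S \<Longrightarrow> \<exists>G C. open G \<and> convex G \<and> y \<in> G \<and>
                 convex_cone_with_vertex C y \<and> S \<inter> G = C \<inter> G"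
  shows "convex S"
proof -
  obtain G C where GC: "\<And>y. y \<in> S \<Longrightarrow> open (G y) \<and> convex (G y) \<and> y \<in> G y \<and>
                 convex_cone_with_vertex (C y) y \<and> S \<inter> G y = C y \<inter> G y"
    using loc by metis
  have memC: "x \<in> C y" if "y \<in> S" "x \<in> S" "x \<in> G y" for y x
  proof -
    have "S \<inter> G y = C y \<inter> G y" using GC[OF that(1)] by blast
    then show ?thesis using that(2,3) by (metis IntD1 IntI)
  qed
  have memS: "x \<in> S" if "y \<in> S" "x \<in> C y" "x \<in> G y" for y x
  proof -
    have "S \<inter> G y = C y \<inter> G y" using GC[OF that(1)] by blast
    then show ?thesis using that(2,3) by (metis IntD1 IntI)
  qed
  have small: "\<exists>e>0. \<forall>t. 0 \<le> t \<and> t \<le> e \<longrightarrow> p + t *\<^sub>R w \<in> U"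
    if "open U" "p \<in> U" for p w :: 'v and U
    using tvs_small[OF tvs that] .
  have lem2: "p + w \<in> C p" if "p \<in> S" "q \<in> S" "p \<in> G q" "q + w \<in> C q" for p q w
  proof -
    have cq: "convex_cone_with_vertex (C q) q" using GC[OF that(2)] by blast
    have cp: "convex_cone_with_vertex (C p) p" using GC[OF that(1)] by blast
    have "q + (p - q) \<in> C q" using memC[OF that(2) that(1) that(3)] by simp
    have "open (G q \<inter> G p)" "p \<in> G q \<inter> G p" using GC[OF that(1)] GC[OF that(2)] that by auto
    from small[OF this, of w] obtain e where e: "e > 0" "\<forall>t. 0 \<le> t \<and> t \<le> e \<longrightarrow> p + t *\<^sub>R w \<in> G q \<inter> G p"
      by blast
    have "q + ((p - q) + e *\<^sub>R w) \<in> C q"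
      by (rule cone_add[OF cq \<open>q + (p - q) \<in> C q\<close> cone_scale[OF cq that(4)]]) (use e in simp)
    then have "p + e *\<^sub>R w \<in> C q" by (simp add: algebra_simps)
    moreover have he: "p + e *\<^sub>R w \<in> G q" "p + e *\<^sub>R w \<in> G p" using e(2)[rule_format, of e] e(1) by auto
    ultimately have "p + e *\<^sub>R w \<in> S" using memS[OF that(2)] by blast
    then have "p + e *\<^sub>R w \<in> C p" using memC[OF that(1) _ he(2)] by blast
    then show ?thesis using cone_unscale[OF cp _ e(1)] by blast
  qed
  have lem1: "p + w \<in> C p" if "p \<in> S" "q \<in> S" "q \<in> G p" "p + (p - q) \<in> C p" "q + w \<in> C q"
    for p q w
  proof -
    have cq: "convex_cone_with_vertex (C q) q" using GC[OF that(2)] by blast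
    have cp: "convex_cone_with_vertex (C p) p" using GC[OF that(1)] by blast
    have "open (G q \<inter> G p)" "q \<in> G q \<inter> G p" using GC[OF that(1)] GC[OF that(2)] that by auto
    from small[OF this, of w] obtain e where e: "e > 0" "\<forall>t. 0 \<le> t \<and> t \<le> e \<longrightarrow> q + t *\<^sub>R w \<in> G q \<inter> G p"
      by blast
    have "q + e *\<^sub>R w \<in> C q" using cone_scale[OF cq that(5)] e by simp
    moreover have he: "q + e *\<^sub>R w \<in> G q" "q + e *\<^sub>R w \<in> G p" using e(2)[rule_format, of e] e(1) by auto
    ultimately have "q + e *\<^sub>R w \<in> S" using memS[OF that(2)] by blast
    then have "q + e *\<^sub>R w \<in> C p" using memC[OF that(1) _ he(2)] by blast
    then have "p + ((q - p) + e *\<^sub>R w) \<in> C p" by (simp add: algebra_simps)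
    then have "p + ((p - q) + ((q - p) + e *\<^sub>R w)) \<in> C p"
      using cone_add[OF cp that(4)] by blast
    then have "p + e *\<^sub>R w \<in> C p" by (simp add: algebra_simps)
    then show ?thesis using cone_unscale[OF cp _ e(1)] by blast
  qed
  have key: "\<exists>N. open N \<and> z \<in> N \<and> (\<forall>z'\<in>N \<inter> S. closed_segment a z' \<subseteq> S)"
    if aS: "a \<in> S" and zS: "z \<in> S" and seg: "closed_segment a z \<subseteq> S" for a z
  proof -
    define p where "p = (\<lambda>l::real. a + l *\<^sub>R (z - a))"
    have p1: "p 1 = z" by (simp add: p_def)
    have pS: "p l \<in> S" if "0 \<le> l" "l \<le> 1" for l
    proof -
      have "(1 - l) *\<^sub>R a + l *\<^sub>R z \<in> closed_segment a z"
        using that unfolding closed_segment_def by blast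
      moreover have "(1 - l) *\<^sub>R a + l *\<^sub>R z = p l" by (simp add: p_def algebra_simps)
      ultimately show ?thesis using seg by auto
    qed
    have cC: "convex_cone_with_vertex (C y) y" if "y \<in> S" for y using GC[OF that] by blast
    have GG: "open (G y)" "y \<in> G y" if "y \<in> S" for y using GC[OF that] by auto
    have pcont: "continuous_on UNIV p"
      unfolding p_def by (intro tvs_add[OF tvs] tvs_scale[OF tvs] continuous_on_const continuous_on_id)
    have T1: "p l + (z - a) \<in> C (p l) \<and> p l + (a - z) \<in> C (p l)" if l: "0 < l" "l < 1" for l
    proof
      have plS: "p l \<in> S" using pS l by simp
      obtain e where e: "e > 0" "\<forall>t. 0 \<le> t \<and> t \<le> e \<longrightarrow> p l + t *\<^sub>R (z - a) \<in> G (p l)"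
        using small[OF GG[OF plS], of "z - a"] by blast
      define t where "t = min e (1 - l)"
      have t: "0 < t" "t \<le> e" "t \<le> 1 - l" using e l by (auto simp: t_def)
      have "p l + t *\<^sub>R (z - a) = p (l + t)" by (simp add: p_def algebra_simps)
      then have "p l + t *\<^sub>R (z - a) \<in> S" using pS[of "l + t"] t l by simp
      then have "p l + t *\<^sub>R (z - a) \<in> C (p l)" using memC[OF plS] e t by simp
      then show "p l + (z - a) \<in> C (p l)" using cone_unscale[OF cC[OF plS] _ t(1)] by blast
    next
      have plS: "p l \<in> S" using pS l by simp
      obtain e where e: "e > 0" "\<forall>t. 0 \<le> t \<and> t \<le> e \<longrightarrow> p l + t *\<^sub>R (a - z) \<in> G (p l)"
        using small[OF GG[OF plS], of "a - z"] by blast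
      define t where "t = min e l"
      have t: "0 < t" "t \<le> e" "t \<le> l" using e l by (auto simp: t_def)
      have "p l + t *\<^sub>R (a - z) = p (l - t)" by (simp add: p_def algebra_simps)
      then have "p l + t *\<^sub>R (a - z) \<in> S" using pS[of "l - t"] t l by simp
      then have "p l + t *\<^sub>R (a - z) \<in> C (p l)" using memC[OF plS] e t by simp
      then show "p l + (a - z) \<in> C (p l)" using cone_unscale[OF cC[OF plS] _ t(1)] by blast
    qed
    have T1z: "z + (a - z) \<in> C z"
    proof -
      obtain e where e: "e > 0" "\<forall>t. 0 \<le> t \<and> t \<le> e \<longrightarrow> z + t *\<^sub>R (a - z) \<in> G z"
        using small[OF GG[OF zS], of "a - z"] by blast
      define t where "t = min e 1"
      have t: "0 < t" "t \<le> e" "t \<le> 1" using e by (auto simp: t_def)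
      have "z + t *\<^sub>R (a - z) = p (1 - t)" by (simp add: p_def algebra_simps)
      then have "z + t *\<^sub>R (a - z) \<in> S" using pS[of "1 - t"] t by simp
      then have "z + t *\<^sub>R (a - z) \<in> C z" using memC[OF zS] e t by simp
      then show ?thesis using cone_unscale[OF cC[OF zS] _ t(1)] by blast
    qed
    define R where "R = (\<lambda>l l'. \<forall>w. p l + w \<in> C (p l) \<longleftrightarrow> p l' + w \<in> C (p l'))"
    have T2: "R l l'" if "l \<in> {0<..<1}" "l' \<in> {0<..<1}" for l l'
    proof (rule connected_equivalence_relation[OF connected_Ioo that])
      show "R y x" if "R x y" for x y using that by (auto simp: R_def)
      show "R x z" if "R x y" "R y z" for x y z using that by (auto simp: R_def)
      fix l0 assume l0: "l0 \<in> {0<..<(1::real)}"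
      have pl0S: "p l0 \<in> S" using pS l0 by simp
      define T where "T = {0<..<(1::real)} \<inter> (p -` G (p l0))"
      have "open (p -` G (p l0))"
        using pcont GG[OF pl0S] continuous_on_open_vimage[of UNIV p] by auto
      then have "openin (top_of_set {0<..<1}) T" unfolding T_def by (simp add: openin_open_Int)
      moreover have "l0 \<in> T" using l0 GG[OF pl0S] by (simp add: T_def)
      moreover have "R l0 l" if "l \<in> T" for l
      proof -
        have l: "0 < l" "l < 1" "p l \<in> G (p l0)" using that by (auto simp: T_def)
        have plS: "p l \<in> S" using pS l by simp
        have "p l0 + (p l0 - p l) \<in> C (p l0)"
        proof (cases "l \<le> l0")
          case True
          have "p l0 + (l0 - l) *\<^sub>R (z - a) \<in> C (p l0)"
            using cone_scale[OF cC[OF pl0S] conjunct1[OF T1] ] l0 True by simp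
          moreover have "p l0 - p l = (l0 - l) *\<^sub>R (z - a)" by (simp add: p_def algebra_simps)
          ultimately show ?thesis by simp
        next
          case False
          have "p l0 + (l - l0) *\<^sub>R (a - z) \<in> C (p l0)"
            using cone_scale[OF cC[OF pl0S] conjunct2[OF T1] ] l0 False by simp
          moreover have "p l0 - p l = (l - l0) *\<^sub>R (a - z)" by (simp add: p_def algebra_simps)
          ultimately show ?thesis by simp
        qed
        then show ?thesis unfolding R_def
          using lem2[OF plS pl0S l(3)] lem1[OF pl0S plS l(3)] by blast
      qed
      ultimately show "\<exists>T. openin (top_of_set {0<..<1}) T \<and> l0 \<in> T \<and> (\<forall>x\<in>T. R l0 x)" by blast
    qed
    obtain l1 where l1: "0 < l1" "l1 < 1" "p l1 \<in> G z"
    proof -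
      obtain e where e: "e > 0" "\<forall>t. 0 \<le> t \<and> t \<le> e \<longrightarrow> z + t *\<^sub>R (a - z) \<in> G z"
        using small[OF GG[OF zS], of "a - z"] by blast
      define t where "t = min e (1/2)"
      have t: "0 < t" "t \<le> e" "t \<le> 1/2" using e by (auto simp: t_def)
      have "z + t *\<^sub>R (a - z) = p (1 - t)" by (simp add: p_def algebra_simps)
      moreover have "z + t *\<^sub>R (a - z) \<in> G z" using e t by simp
      ultimately have "p (1 - t) \<in> G z" by simp
      then show ?thesis using that[of "1 - t"] t by simp
    qed
    have transport: "p l + w \<in> C (p l)" if "0 < l" "l \<le> 1" "z + w \<in> C z" for l w
    proof (cases "l = 1")
      case True then show ?thesis using that p1 by simp
    next
      case False
      have "p l1 + w \<in> C (p l1)" using lem2[OF pS[of l1] zS l1(3) that(3)] l1 by simp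
      then show ?thesis using T2[of l1 l] l1 that False unfolding R_def by auto
    qed
    obtain mu where mu: "0 < mu" "mu \<le> 1" "p mu \<in> G a"
    proof -
      obtain e where e: "e > 0" "\<forall>t. 0 \<le> t \<and> t \<le> e \<longrightarrow> a + t *\<^sub>R (z - a) \<in> G a"
        using small[OF GG[OF aS], of "z - a"] by blast
      then show ?thesis using that[of "min e 1"] by (auto simp: p_def)
    qed
    define Gf where "Gf = (\<lambda>x::real \<times> 'v. a + fst x *\<^sub>R (snd x - a))"
    have Gfc: "continuous_on UNIV Gf"
    proof -
      have "continuous_on UNIV (\<lambda>x::real \<times> 'v. a + fst x *\<^sub>R (snd x + (- a)))"
        by (intro tvs_add[OF tvs] tvs_scale[OF tvs] continuous_on_const continuous_on_fst
              continuous_on_snd continuous_on_id)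
      then show ?thesis unfolding Gf_def by simp
    qed
    have cover: "\<exists>I N. open I \<and> open N \<and> l0 \<in> I \<and> z \<in> N \<and>
         (\<forall>l\<in>I \<inter> {0..1}. \<forall>z'\<in>N \<inter> S \<inter> G z. Gf (l, z') \<in> S)" if l0: "l0 \<in> {mu..1}" for l0
    proof -
      have pl0S: "p l0 \<in> S" using pS l0 mu by simp
      have "open (Gf -` G (p l0))"
        using Gfc GG[OF pl0S] continuous_on_open_vimage[of UNIV Gf] by auto
      moreover have "(l0, z) \<in> Gf -` G (p l0)" using GG[OF pl0S] by (simp add: Gf_def p_def)
      ultimately obtain I N where IN: "open I" "open N" "(l0, z) \<in> I \<times> N" "I \<times> N \<subseteq> Gf -` G (p l0)"
        by (rule open_prod_elim)
      have "Gf (l, z') \<in> S" if l: "l \<in> I \<inter> {0..1}" and z': "z' \<in> N \<inter> S \<inter> G z" for l z'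
      proof -
        have "z + (z' - z) \<in> C z" using memC[OF zS, of z'] z' by simp
        then have "p l0 + (z' - z) \<in> C (p l0)" using transport[of l0] l0 mu by simp
        then have w1: "p l0 + l *\<^sub>R (z' - z) \<in> C (p l0)" using cone_scale[OF cC[OF pl0S]] l by simp
        have w2: "p l0 + (l - l0) *\<^sub>R (z - a) \<in> C (p l0)"
        proof (cases "l0 = 1")
          case True
          have "z + (1 - l) *\<^sub>R (a - z) \<in> C z" using cone_scale[OF cC[OF zS] T1z] l by simp
          moreover have "(1 - l) *\<^sub>R (a - z) = (l - 1) *\<^sub>R (z - a)" by (simp add: algebra_simps)
          ultimately show ?thesis using True p1 by simp
        next
          case False
          then have l0': "0 < l0" "l0 < 1" using l0 mu by auto
          show ?thesis
          proof (cases "l0 \<le> l")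
            case True
            then show ?thesis using cone_scale[OF cC[OF pl0S] conjunct1[OF T1[OF l0']]] by simp
          next
            case False
            have "p l0 + (l0 - l) *\<^sub>R (a - z) \<in> C (p l0)"
              using cone_scale[OF cC[OF pl0S] conjunct2[OF T1[OF l0']]] False by simp
            moreover have "(l0 - l) *\<^sub>R (a - z) = (l - l0) *\<^sub>R (z - a)" by (simp add: algebra_simps)
            ultimately show ?thesis by simp
          qed
        qed
        have "p l0 + (l *\<^sub>R (z' - z) + (l - l0) *\<^sub>R (z - a)) \<in> C (p l0)"
          using cone_add[OF cC[OF pl0S] w1 w2] .
        moreover have "p l0 + (l *\<^sub>R (z' - z) + (l - l0) *\<^sub>R (z - a)) = Gf (l, z')"
          by (simp add: p_def Gf_def algebra_simps)
        moreover have "Gf (l, z') \<in> G (p l0)" using IN l z' by auto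
        ultimately show ?thesis using memS[OF pl0S] by simp
      qed
      then show ?thesis using IN by blast
    qed
    obtain I N where IN: "\<And>l0. l0 \<in> {mu..1} \<Longrightarrow> open (I l0) \<and> open (N l0) \<and> l0 \<in> I l0 \<and> z \<in> N l0 \<and>
         (\<forall>l\<in>I l0 \<inter> {0..1}. \<forall>z'\<in>N l0 \<inter> S \<inter> G z. Gf (l, z') \<in> S)"
      using cover by metis
    obtain D where D: "D \<subseteq> {mu..1}" "finite D" "{mu..1} \<subseteq> (\<Union>c\<in>D. I c)"
      by (rule compactE_image[of "{mu..1}" "{mu..1}" I]) (use IN in auto)
    define Nst where "Nst = (\<Inter>c\<in>D. N c) \<inter> G z \<inter> ((\<lambda>z'. Gf (mu, z')) -` G a)"
    have "continuous_on UNIV (\<lambda>z'::'v. a + mu *\<^sub>R (z' + (- a)))"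
      by (intro tvs_add[OF tvs] tvs_scale[OF tvs] continuous_on_const continuous_on_id)
    then have "continuous_on UNIV (\<lambda>z'. Gf (mu, z'))" unfolding Gf_def by simp
    then have "open ((\<lambda>z'. Gf (mu, z')) -` G a)"
      using GG[OF aS] continuous_on_open_vimage[of UNIV] by auto
    moreover have "open (\<Inter>c\<in>D. N c)" using D IN by (intro open_INT) auto
    ultimately have "open Nst" unfolding Nst_def using GG[OF zS] by auto
    moreover have "z \<in> Nst" unfolding Nst_def using D IN GG[OF zS] mu
      by (auto simp: Gf_def p_def)
    moreover have "closed_segment a z' \<subseteq> S" if z': "z' \<in> Nst \<inter> S" for z'
    proof
      fix x assume "x \<in> closed_segment a z'"
      then obtain u where u: "0 \<le> u" "u \<le> 1" "x = (1 - u) *\<^sub>R a + u *\<^sub>R z'"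
        unfolding closed_segment_def by blast
      have xG: "x = Gf (u, z')" using u by (simp add: Gf_def algebra_simps)
      have big: "Gf (v, z') \<in> S" if v: "mu \<le> v" "v \<le> 1" for v
      proof -
        have "v \<in> (\<Union>c\<in>D. I c)" using D(3) v by auto
        then obtain c where c: "c \<in> D" "v \<in> I c" by blast
        then show ?thesis using IN[of c] D z' v mu unfolding Nst_def by auto
      qed
      show "x \<in> S"
      proof (cases "mu \<le> u")
        case True then show ?thesis using big[of u] u xG by metis
      next
        case False
        have gS: "Gf (mu, z') \<in> S \<inter> G a" using big[of mu] mu z' unfolding Nst_def by auto
        have "S \<inter> G a = C a \<inter> G a" using GC[OF aS] by blast
        moreover have "convex (C a \<inter> G a)"
          using GC[OF aS] by (auto simp: convex_cone_with_vertex_def intro: convex_Int)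
        ultimately have cv: "convex (S \<inter> G a)" by simp
        have "(1 - u / mu) *\<^sub>R a + (u / mu) *\<^sub>R Gf (mu, z') \<in> S \<inter> G a"
          using convexD[OF cv _ gS, of a "1 - u/mu" "u/mu"] aS GG[OF aS] u mu False by auto
        moreover have "(1 - u / mu) *\<^sub>R a + (u / mu) *\<^sub>R Gf (mu, z') = x"
          using mu by (simp add: xG Gf_def algebra_simps)
        ultimately show ?thesis by simp
      qed
    qed
    ultimately show ?thesis by blast
  qed
  show ?thesis
    unfolding convex_contains_segment
  proof (intro ballI)
    fix a b assume aS: "a \<in> S" and bS: "b \<in> S"
    define A where "A = {z\<in>S. closed_segment a z \<subseteq> S}"
    have "openin (top_of_set S) A"
    proof (subst openin_subopen, intro ballI)
      fix z assume "z \<in> A"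
      then obtain N where "open N" "z \<in> N" "\<forall>z'\<in>N \<inter> S. closed_segment a z' \<subseteq> S"
        using key[OF aS] unfolding A_def by blast
      then show "\<exists>T. openin (top_of_set S) T \<and> z \<in> T \<and> T \<subseteq> A"
        using \<open>z \<in> A\<close> by (intro exI[of _ "S \<inter> N"]) (auto simp: A_def openin_open_Int)
    qed
    moreover have "closedin (top_of_set S) A"
    proof -
      define H where "H = (\<Inter>u\<in>{0..1::real}. (\<lambda>z. (1 - u) *\<^sub>R a + u *\<^sub>R z) -` S)"
      have cl: "closed ((\<lambda>z. (1 - u) *\<^sub>R a + u *\<^sub>R z) -` S)" for u :: real
      proof -
        have "continuous_on UNIV (\<lambda>z::'v. (1 - u) *\<^sub>R a + u *\<^sub>R z)"
          by (intro tvs_add[OF tvs] tvs_scale[OF tvs] continuous_on_const continuous_on_id)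
        then show ?thesis using continuous_on_closed_vimage[of UNIV] clS by auto
      qed
      have "closed H" unfolding H_def by (rule closed_INT) (simp add: cl)
      moreover have "A = S \<inter> H" unfolding A_def H_def by (rule segH)
      ultimately show ?thesis by (simp add: closedin_closed_Int)
    qed
    moreover have "a \<in> A" unfolding A_def using aS by simp
    ultimately have "A = {} \<or> A = S" using coS[unfolded connected_clopen] by simp
    then have "A = S" using \<open>a \<in> A\<close> by auto
    then show "closed_segment a b \<subseteq> S" using bS unfolding A_def by blast
  qed
qed



theorem corollary2p17:
  fixes f :: "'x::t2_space \<Rightarrow> 'v::{real_vector,t2_space}"
  assumes "locally_convex_tvs TYPE('v)"
    and "connected (UNIV :: 'x set)"
    and "locally connected (UNIV :: 'x set)"
    and "continuous_on UNIV f"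
    and "local_convexity_data f"
    and "\<And>v. connected (f -` {v})"
    and "closed_map euclidean (top_of_set (range f)) f"
  shows "open_map euclidean (top_of_set (range f)) f \<and> locally_convex_set (range f) \<and>
         (closed (range f) \<longrightarrow> convex (range f))"
proof -
  note tvs = assms(1)
  define P where "P = (\<lambda>x N C. open N \<and> x \<in> N \<and> convex_cone_with_vertex C (f x) \<and>
             f ` N \<subseteq> C \<and> nbhd_in (top_of_set C) (f ` N) (f x) \<and>
             open_map (top_of_set N) (top_of_set C) f \<and>
             (\<forall>U'. U' \<subseteq> N \<and> nbhd_in euclidean U' x \<longrightarrow>
                 nbhd_in (top_of_set C) (f ` U') (f x)))"
  have allx: "\<forall>x. \<exists>N C. P x N C"
  proof
    fix x
    have ex: "\<exists>N. open N \<and> x \<in> N \<and> (\<forall>U. open U \<and> x \<in> U \<and> U \<subseteq> N \<longrightarrow>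
        (\<exists>C. convex_cone_with_vertex C (f x) \<and>
             f ` U \<subseteq> C \<and> nbhd_in (top_of_set C) (f ` U) (f x) \<and>
             open_map (top_of_set U) (top_of_set C) f \<and>
             (\<forall>U'. U' \<subseteq> U \<and> nbhd_in euclidean U' x \<longrightarrow>
                 nbhd_in (top_of_set C) (f ` U') (f x))))"
      using assms(5) unfolding local_convexity_data_def by (rule spec)
    then obtain N where N: "open N \<and> x \<in> N \<and> (\<forall>U. open U \<and> x \<in> U \<and> U \<subseteq> N \<longrightarrow>
        (\<exists>C. convex_cone_with_vertex C (f x) \<and>
             f ` U \<subseteq> C \<and> nbhd_in (top_of_set C) (f ` U) (f x) \<and>
             open_map (top_of_set U) (top_of_set C) f \<and>
             (\<forall>U'. U' \<subseteq> U \<and> nbhd_in euclidean U' x \<longrightarrow>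
                 nbhd_in (top_of_set C) (f ` U') (f x))))"
      by (elim exE) (erule that)
    have oN: "open N" and xN: "x \<in> N" using N by simp_all
    have "\<exists>C. convex_cone_with_vertex C (f x) \<and>
             f ` N \<subseteq> C \<and> nbhd_in (top_of_set C) (f ` N) (f x) \<and>
             open_map (top_of_set N) (top_of_set C) f \<and>
             (\<forall>U'. U' \<subseteq> N \<and> nbhd_in euclidean U' x \<longrightarrow>
                 nbhd_in (top_of_set C) (f ` U') (f x))"
      using N[THEN conjunct2, THEN conjunct2, rule_format, of N] oN xN by simp
    then obtain C where C: "convex_cone_with_vertex C (f x) \<and>
             f ` N \<subseteq> C \<and> nbhd_in (top_of_set C) (f ` N) (f x) \<and>
             open_map (top_of_set N) (top_of_set C) f \<and>
             (\<forall>U'. U' \<subseteq> N \<and> nbhd_in euclidean U' x \<longrightarrow>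
                 nbhd_in (top_of_set C) (f ` U') (f x))"
      by (elim exE) (erule that)
    have "P x N C" unfolding P_def by (rule conjI[OF oN conjI[OF xN C]])
    then show "\<exists>N C. P x N C" by blast
  qed
  have "\<exists>N. \<forall>x. \<exists>C. P x (N x) C" using allx by (rule choice)
  then obtain N where "\<forall>x. \<exists>C. P x (N x) C" by (elim exE) (erule that)
  then have "\<exists>Cx. \<forall>x. P x (N x) (Cx x)" by (rule choice)
  then obtain Cx where PNC: "\<forall>x. P x (N x) (Cx x)" by (elim exE) (erule that)
  have NC: "open (N x) \<and> x \<in> N x \<and> convex_cone_with_vertex (Cx x) (f x) \<and>
             f ` N x \<subseteq> Cx x \<and> nbhd_in (top_of_set (Cx x)) (f ` N x) (f x) \<and>
             open_map (top_of_set (N x)) (top_of_set (Cx x)) f \<and>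
             (\<forall>U'. U' \<subseteq> N x \<and> nbhd_in euclidean U' x \<longrightarrow>
                 nbhd_in (top_of_set (Cx x)) (f ` U') (f x))" for x
    using PNC[rule_format, of x] unfolding P_def .
  have agree: "\<exists>O'. open O' \<and> f x \<in> O' \<and> Cx x \<inter> O' = Cx x' \<inter> O'"
    if "f x' = f x" "x' \<in> N x" for x x'
  proof -
    define A where "A = f ` (N x \<inter> N x')"
    have "openin (top_of_set (N x)) (N x \<inter> N x')"
      using NC[of x'] by (simp add: openin_open_Int)
    then have "openin (top_of_set (Cx x)) A"
      using NC[of x] unfolding A_def open_map_def by blast
    then obtain O1 where O1: "open O1" "A = Cx x \<inter> O1" by (meson openin_open)
    have "nbhd_in euclidean (N x \<inter> N x') x'"
      unfolding nbhd_in_def using NC[of x] NC[of x'] that by (intro exI[of _ "N x \<inter> N x'"]) auto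
    then have "nbhd_in (top_of_set (Cx x')) A (f x')"
      using NC[of x'] unfolding A_def by blast
    then obtain W where W: "openin (top_of_set (Cx x')) W" "f x' \<in> W" "W \<subseteq> A"
      unfolding nbhd_in_def by blast
    then obtain O2 where O2: "open O2" "W = Cx x' \<inter> O2" by (meson openin_open)
    have AC: "A \<subseteq> Cx x" "A \<subseteq> Cx x'" using NC[of x] NC[of x'] unfolding A_def by auto
    have "f x \<in> A" unfolding A_def using that NC[of x'] by (metis IntI image_eqI)
    show ?thesis
      apply (rule exI[of _ "O1 \<inter> O2"])
      using O1 O2 W AC \<open>f x \<in> A\<close> that by auto
  qed
  have master: "\<exists>O'. open O' \<and> f x0 \<in> O' \<and> range f \<inter> O' \<subseteq> Cx x0" for x0
  proof -
    define y where "y = f x0"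
    define F where "F = f -` {y}"
    define R where "R = (\<lambda>u v. \<exists>O'. open O' \<and> y \<in> O' \<and> Cx u \<inter> O' = Cx v \<inter> O')"
    have Rall: "R x0 v" if "v \<in> F" for v
    proof (rule connected_equivalence_relation[of F])
      show "connected F" unfolding F_def by (rule assms(6))
      show "x0 \<in> F" "v \<in> F" using that by (auto simp: F_def y_def)
      show "R b a" if "R a b" for a b using that unfolding R_def by metis
      show "R a c" if r12: "R a b" "R b c" for a b c
      proof -
        obtain O1 O2 where "open O1" "y \<in> O1" "Cx a \<inter> O1 = Cx b \<inter> O1"
            "open O2" "y \<in> O2" "Cx b \<inter> O2 = Cx c \<inter> O2"
          using r12 unfolding R_def by metis
        then show ?thesis unfolding R_def
          by (intro exI[of _ "O1 \<inter> O2"]) blast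
      qed
      fix u assume u: "u \<in> F"
      show "\<exists>T. openin (top_of_set F) T \<and> u \<in> T \<and> (\<forall>x\<in>T. R u x)"
      proof (intro exI conjI)
        show "openin (top_of_set F) (F \<inter> N u)" using NC[of u] by (simp add: openin_open_Int)
        show "u \<in> F \<inter> N u" using u NC[of u] by simp
        show "\<forall>x\<in>F \<inter> N u. R u x"
        proof
          fix v assume v: "v \<in> F \<inter> N u"
          then have "f v = f u" "v \<in> N u" using u by (auto simp: F_def)
          from agree[OF this] show "R u v" unfolding R_def using u by (auto simp: F_def)
        qed
      qed
    qed
    then obtain Ov where Ov: "\<And>v. v \<in> F \<Longrightarrow> open (Ov v) \<and> y \<in> Ov v \<and> Cx x0 \<inter> Ov v = Cx v \<inter> Ov v"
      unfolding R_def by metis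
    define W' where "W' = (\<Union>v\<in>F. N v \<inter> f -` Ov v)"
    have "open (f -` Ov v)" if "v \<in> F" for v
      using assms(4) Ov[OF that] continuous_on_open_vimage[of UNIV f] by auto
    then have oW: "open W'" unfolding W'_def using NC by auto
    have FW: "F \<subseteq> W'" unfolding W'_def using NC Ov by (auto simp: F_def)
    have fW: "f ` W' \<subseteq> Cx x0"
    proof
      fix t assume "t \<in> f ` W'"
      then obtain w v where wv: "v \<in> F" "w \<in> N v" "f w \<in> Ov v" "t = f w"
        unfolding W'_def by blast
      then have "f w \<in> Cx v" using NC[of v] by blast
      then show "t \<in> Cx x0" using Ov[OF wv(1)] wv by blast
    qed
    have "closedin euclidean (- W')" using oW by (simp add: closed_Compl)
    then have "closedin (top_of_set (range f)) (f ` (- W'))"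
      using assms(7) unfolding closed_map_def by blast
    then obtain Cl where Cl: "closed Cl" "f ` (- W') = range f \<inter> Cl" by (meson closedin_closed)
    have "y \<notin> Cl"
    proof
      assume "y \<in> Cl"
      then have "y \<in> f ` (- W')" using Cl(2) by (auto simp: y_def)
      then obtain w where "w \<notin> W'" "f w = y" by blast
      then show False using FW by (auto simp: F_def)
    qed
    moreover have "range f \<inter> (- Cl) \<subseteq> Cx x0"
    proof
      fix t assume t: "t \<in> range f \<inter> (- Cl)"
      then obtain w where w: "t = f w" by blast
      have "w \<in> W'"
      proof (rule ccontr)
        assume "w \<notin> W'"
        then have "t \<in> f ` (- W')" using w by blast
        then show False using Cl(2) t by blast
      qed
      then show "t \<in> Cx x0" using fW w by blast
    qed
    ultimately show ?thesis using Cl(1) unfolding y_def by (intro exI[of _ "- Cl"]) auto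
  qed
  have H: "\<exists>O' C. open O' \<and> convex O' \<and> f x \<in> O' \<and> convex_cone_with_vertex C (f x) \<and>
              range f \<inter> O' = C \<inter> O'" for x
  proof -
    obtain O1 where O1: "open O1" "f x \<in> O1" "range f \<inter> O1 \<subseteq> Cx x" using master by blast
    obtain W where W: "openin (top_of_set (Cx x)) W" "f x \<in> W" "W \<subseteq> f ` N x"
      using NC[of x] unfolding nbhd_in_def by blast
    then obtain O3 where O3: "open O3" "W = Cx x \<inter> O3" by (meson openin_open)
    have lc: "\<forall>x U. open U \<and> x \<in> U \<longrightarrow> (\<exists>W::'v set. open W \<and> convex W \<and> x \<in> W \<and> W \<subseteq> U)"
      using tvs unfolding locally_convex_tvs_def by (elim conjE)
    have "open (O1 \<inter> O3) \<and> f x \<in> O1 \<inter> O3" using O1 O3 W by auto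
    then obtain O' where O': "open O'" "convex O'" "f x \<in> O'" "O' \<subseteq> O1 \<inter> O3"
      using lc by blast
    have "range f \<inter> O' \<subseteq> Cx x" using O' O1 by blast
    moreover have "Cx x \<inter> O' \<subseteq> range f" using O' O3 W by blast
    ultimately have "range f \<inter> O' = Cx x \<inter> O'" by blast
    moreover have "convex_cone_with_vertex (Cx x) (f x)" using NC[of x] by simp
    ultimately show ?thesis using O' by blast
  qed
  have part1: "open_map euclidean (top_of_set (range f)) f"
    unfolding open_map_def
  proof (intro allI impI)
    fix U :: "'x set" assume "openin euclidean U"
    then have oU: "open U" by simp
    show "openin (top_of_set (range f)) (f ` U)"
    proof (subst openin_subopen, intro ballI)
      fix y assume "y \<in> f ` U"
      then obtain x where x: "x \<in> U" "y = f x" by blast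
      obtain O1 where O1: "open O1" "f x \<in> O1" "range f \<inter> O1 \<subseteq> Cx x" using master by blast
      have "nbhd_in euclidean (U \<inter> N x) x"
        unfolding nbhd_in_def using oU NC[of x] x by (intro exI[of _ "U \<inter> N x"]) auto
      then have "nbhd_in (top_of_set (Cx x)) (f ` (U \<inter> N x)) (f x)" using NC[of x] by blast
      then obtain W where W: "openin (top_of_set (Cx x)) W" "f x \<in> W" "W \<subseteq> f ` (U \<inter> N x)"
        unfolding nbhd_in_def by blast
      then obtain O2 where O2: "open O2" "W = Cx x \<inter> O2" by (meson openin_open)
      show "\<exists>T. openin (top_of_set (range f)) T \<and> y \<in> T \<and> T \<subseteq> f ` U"
      proof (intro exI conjI)
        show "openin (top_of_set (range f)) (range f \<inter> (O1 \<inter> O2))"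
          by (rule openin_open_Int) (rule open_Int[OF O1(1) O2(1)])
        show "y \<in> range f \<inter> (O1 \<inter> O2)" using x O1 O2 W by auto
        have "range f \<inter> (O1 \<inter> O2) \<subseteq> W" using O1(3) O2(2) by blast
        moreover have "W \<subseteq> f ` U" using W(3) by blast
        ultimately show "range f \<inter> (O1 \<inter> O2) \<subseteq> f ` U" by (rule subset_trans)
      qed
    qed
  qed
  have part2: "locally_convex_set (range f)"
    unfolding locally_convex_set_def
  proof
    fix y assume "y \<in> range f"
    then obtain x where yx: "y = f x" by blast
    obtain O' C where OC: "open O'" "convex O'" "f x \<in> O'" "convex_cone_with_vertex C (f x)"
        "range f \<inter> O' = C \<inter> O'" using H[of x] by (elim exE conjE)
    note OC = OC[folded yx]
    have "nbhd_in euclidean O' y" unfolding nbhd_in_def using OC by auto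
    moreover have "convex (O' \<inter> range f)"
      using OC by (metis Int_commute convex_Int convex_cone_with_vertex_def)
    ultimately show "\<exists>N. nbhd_in euclidean N y \<and> convex (N \<inter> range f)" by blast
  qed
  have part3: "convex (range f)" if "closed (range f)"
  proof (rule tietze_cone[OF tvs that])
    show "connected (range f)" using connected_continuous_image[OF assms(4,2)] .
    fix y assume "y \<in> range f"
    then obtain x where yx: "y = f x" by blast
    show "\<exists>G C. open G \<and> convex G \<and> y \<in> G \<and> convex_cone_with_vertex C y \<and>
                 range f \<inter> G = C \<inter> G" using H[of x] unfolding yx .
  qed
  show ?thesis using part1 part2 part3 by blast
qed

end
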